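(* Let $K$ be a field of characteristic $0$, let $S=K[x_1,\ldots,x_n]$ be graded by $\deg x_i=a_i>0$, and let $I,J\subsetneq S$ be graded ideals. Call a graded ideal $\mathfrak a\subset S$ strongly Golod if $\partial(\mathfrak a)^2\subseteq \mathfrak a$, where $\partial(\mathfrak a)$ is the ideal generated by all $\partial f/\partial x_i$ with $f\in\mathfrak a$, $1\le i\le n$. Then: (a) if $I$ and $J$ are strongly Golod, then $I\cap J$ and $IJ$ are strongly Golod; (b) if $I$ and $J$ are strongly Golod and $\partial(I)\partial(J)\subseteq I+J$, then $I+J$ is strongly Golod; (c) if $I$ is strongly Golod, $J$ is arbitrary, and $I:J=I:J^2$, then $I:J$ is strongly Golod; (d) $I^k$, $I^{(k)}$ and $\widetilde{I^k}$ are strongly Golod for all $k\ge 2$.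
   Context: Here $I^{(k)}=\bigcup_{t\ge1} I^k:L^t$, where $L$ is the intersection of all associated, non-minimal prime ideals of $I^k$ (the $k$-th symbolic power), and $\widetilde{I^k}=\bigcup_{t\ge1} I^k:\mathfrak m^t$ where $\mathfrak m=(x_1,\ldots,x_n)$ (the $k$-th saturated power). *)

theory Defs
  imports Main "HOL-Library.Poly_Mapping"
begin

text \<open>Polynomial ring S = K[x_v | v in 'v] with a finite type 'v of variables
 (n = CARD('v)); a polynomial is a finitely supported map from monomials
 (exponent vectors 'v =>0 nat) to coefficients.\<close>

type_synonym ('v, 'k) mpoly = "('v \<Rightarrow>\<^sub>0 nat) \<Rightarrow>\<^sub>0 'k"

definition var :: "'v \<Rightarrow> ('v, 'k::comm_ring_1) mpoly" where
  "var i = Poly_Mapping.single (Poly_Mapping.single i 1) 1"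

definition pdiff :: "'v \<Rightarrow> ('v, 'k::comm_ring_1) mpoly \<Rightarrow> ('v, 'k) mpoly" where
  "pdiff i f = (\<Sum>m\<in>Poly_Mapping.keys f.
      Poly_Mapping.single (m - Poly_Mapping.single i (1::nat))
        ((of_nat (Poly_Mapping.lookup m i) :: 'k) * Poly_Mapping.lookup f m))"

definition is_ideal :: "'a::comm_ring_1 set \<Rightarrow> bool" where
  "is_ideal I \<longleftrightarrow> 0 \<in> I \<and> (\<forall>f\<in>I. \<forall>g\<in>I. f + g \<in> I) \<and> (\<forall>f\<in>I. \<forall>r. r * f \<in> I)"

definition ideal_gen :: "'a::comm_ring_1 set \<Rightarrow> 'a set" where
  "ideal_gen X = \<Inter>{J. is_ideal J \<and> X \<subseteq> J}"

definition ideal_sum :: "'a::comm_ring_1 set \<Rightarrow> 'a set \<Rightarrow> 'a set" where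
  "ideal_sum I J = {f + g |f g. f \<in> I \<and> g \<in> J}"

definition ideal_prod :: "'a::comm_ring_1 set \<Rightarrow> 'a set \<Rightarrow> 'a set" where
  "ideal_prod I J = ideal_gen {f * g |f g. f \<in> I \<and> g \<in> J}"

fun ideal_pow :: "'a::comm_ring_1 set \<Rightarrow> nat \<Rightarrow> 'a set" where
  "ideal_pow I 0 = UNIV"
| "ideal_pow I (Suc k) = ideal_prod I (ideal_pow I k)"

definition ideal_colon :: "'a::comm_ring_1 set \<Rightarrow> 'a set \<Rightarrow> 'a set" where
  "ideal_colon I J = {f. \<forall>g\<in>J. f * g \<in> I}"

definition is_prime_ideal :: "'a::comm_ring_1 set \<Rightarrow> bool" where
  "is_prime_ideal P \<longleftrightarrow> is_ideal P \<and> P \<noteq> UNIV \<and> (\<forall>f g. f * g \<in> P \<longrightarrow> f \<in> P \<or> g \<in> P)"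

definition associated_prime :: "'a::comm_ring_1 set \<Rightarrow> 'a set \<Rightarrow> bool" where
  "associated_prime I P \<longleftrightarrow> is_prime_ideal P \<and> (\<exists>f. P = ideal_colon I {f})"

definition minimal_prime :: "'a::comm_ring_1 set \<Rightarrow> 'a set \<Rightarrow> bool" where
  "minimal_prime I P \<longleftrightarrow> is_prime_ideal P \<and> I \<subseteq> P \<and>
     (\<forall>Q. is_prime_ideal Q \<and> I \<subseteq> Q \<and> Q \<subseteq> P \<longrightarrow> Q = P)"

text \<open>k-th symbolic power: union over t of I^k : L^t, L the intersection of the
  associated non-minimal primes of I^k (L = S if there are none).\<close>
definition symbolic_power :: "'a::comm_ring_1 set \<Rightarrow> nat \<Rightarrow> 'a set" where
  "symbolic_power I k =
     (let L = \<Inter>{P. associated_prime (ideal_pow I k) P \<and> \<not> minimal_prime (ideal_pow I k) P}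
      in \<Union>t\<in>{1..}. ideal_colon (ideal_pow I k) (ideal_pow L t))"

definition max_ideal :: "('v, 'k::comm_ring_1) mpoly set" where
  "max_ideal = ideal_gen (range var)"

definition saturated_power :: "('v, 'k::comm_ring_1) mpoly set \<Rightarrow> nat \<Rightarrow> ('v, 'k) mpoly set" where
  "saturated_power I k = (\<Union>t\<in>{1..}. ideal_colon (ideal_pow I k) (ideal_pow max_ideal t))"

definition wdeg :: "('v \<Rightarrow> nat) \<Rightarrow> ('v \<Rightarrow>\<^sub>0 nat) \<Rightarrow> nat" where
  "wdeg a m = (\<Sum>v\<in>Poly_Mapping.keys m. a v * Poly_Mapping.lookup m v)"

definition hcomp :: "('v \<Rightarrow> nat) \<Rightarrow> nat \<Rightarrow> ('v, 'k::comm_ring_1) mpoly \<Rightarrow> ('v, 'k) mpoly" where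
  "hcomp a d f = (\<Sum>m\<in>{m\<in>Poly_Mapping.keys f. wdeg a m = d}. Poly_Mapping.single m (Poly_Mapping.lookup f m))"

definition graded_ideal :: "('v \<Rightarrow> nat) \<Rightarrow> ('v, 'k::comm_ring_1) mpoly set \<Rightarrow> bool" where
  "graded_ideal a I \<longleftrightarrow> is_ideal I \<and> (\<forall>f\<in>I. \<forall>d. hcomp a d f \<in> I)"

definition deriv_ideal :: "('v, 'k::comm_ring_1) mpoly set \<Rightarrow> ('v, 'k) mpoly set" where
  "deriv_ideal I = ideal_gen {pdiff i f |i f. f \<in> I}"

definition strongly_golod :: "('v, 'k::comm_ring_1) mpoly set \<Rightarrow> bool" where
  "strongly_golod I \<longleftrightarrow> ideal_prod (deriv_ideal I) (deriv_ideal I) \<subseteq> I"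

end

theory Submission
  imports Defs
begin

lemma pdiff_superset:
  fixes f :: "('v, 'k::comm_ring_1) mpoly"
  assumes "finite S" "Poly_Mapping.keys f \<subseteq> S"
  shows "pdiff i f = (\<Sum>m\<in>S. Poly_Mapping.single (m - Poly_Mapping.single i (1::nat))
        ((of_nat (Poly_Mapping.lookup m i) :: 'k) * Poly_Mapping.lookup f m))"
  unfolding pdiff_def using assms
  by (intro sum.mono_neutral_left) (auto simp: in_keys_iff)

lemma pdiff_add: "pdiff i (f + g) = pdiff i f + pdiff i (g :: ('v, 'k::comm_ring_1) mpoly)"
proof -
  let ?S = "Poly_Mapping.keys f \<union> Poly_Mapping.keys g"
  have fin: "finite ?S" by simp
  have k: "Poly_Mapping.keys (f+g) \<subseteq> ?S" by (rule keys_add)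
  have kf: "Poly_Mapping.keys f \<subseteq> ?S" and kg: "Poly_Mapping.keys g \<subseteq> ?S" by auto
  show ?thesis
    unfolding pdiff_superset[OF fin k] pdiff_superset[OF fin kf] pdiff_superset[OF fin kg]
    by (simp add: lookup_add distrib_left single_add sum.distrib)
qed

lemma pdiff_zero[simp]: "pdiff i (0 :: ('v, 'k::comm_ring_1) mpoly) = 0"
  by (simp add: pdiff_def)

lemma pdiff_sum: "pdiff i (sum F A) = (\<Sum>x\<in>A. pdiff i (F x :: ('v, 'k::comm_ring_1) mpoly))"
  by (induction A rule: infinite_finite_induct) (simp_all add: pdiff_add)

lemma pdiff_single: "pdiff i (Poly_Mapping.single m c :: ('v, 'k::comm_ring_1) mpoly) =
   Poly_Mapping.single (m - Poly_Mapping.single i 1) (of_nat (Poly_Mapping.lookup m i) * c)"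
  by (subst pdiff_superset[of "{m}"]) auto

lemma minus_e_add:
  fixes m n :: "'v \<Rightarrow>\<^sub>0 nat"
  assumes "Poly_Mapping.lookup m i > 0"
  shows "m - Poly_Mapping.single i 1 + n = m + n - Poly_Mapping.single i 1"
  using assms by (intro poly_mapping_eqI) (auto simp: lookup_add lookup_minus lookup_single when_def)

lemma pdiff_mult_single:
  "pdiff i (Poly_Mapping.single m c * Poly_Mapping.single n d :: ('v, 'k::comm_ring_1) mpoly)
   = pdiff i (Poly_Mapping.single m c) * Poly_Mapping.single n d + Poly_Mapping.single m c * pdiff i (Poly_Mapping.single n d)"
proof -
  let ?e = "Poly_Mapping.single i (1::nat)"
  have 1: "Poly_Mapping.single (m - ?e + n) (of_nat (Poly_Mapping.lookup m i) * c * d)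
      = Poly_Mapping.single (m + n - ?e) (of_nat (Poly_Mapping.lookup m i) * c * d :: 'k)"
    using minus_e_add[of m i n] by (cases "Poly_Mapping.lookup m i = 0") auto
  have 2: "Poly_Mapping.single (m + (n - ?e)) (c * (of_nat (Poly_Mapping.lookup n i) * d))
      = Poly_Mapping.single (m + n - ?e) (c * (of_nat (Poly_Mapping.lookup n i) * d) :: 'k)"
    using minus_e_add[of n i m] by (cases "Poly_Mapping.lookup n i = 0") (auto simp: add.commute)
  show ?thesis
    unfolding mult_single pdiff_single 1 2
    by (simp add: lookup_add single_add[symmetric] algebra_simps)
qed

lemma poly_decomp: "f = (\<Sum>m\<in>Poly_Mapping.keys f. Poly_Mapping.single m (Poly_Mapping.lookup f m))"
  by (rule poly_mapping_eqI) (auto simp: lookup_sum lookup_single when_def in_keys_iff)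

lemma pdiff_mult: "pdiff i (f * g) = pdiff i f * g + f * pdiff i (g :: ('v, 'k::comm_ring_1) mpoly)"
proof -
  let ?F = "\<lambda>m. Poly_Mapping.single m (Poly_Mapping.lookup f m)"
  let ?G = "\<lambda>m. Poly_Mapping.single m (Poly_Mapping.lookup g m)"
  have "pdiff i (f * g) = pdiff i ((\<Sum>m\<in>Poly_Mapping.keys f. ?F m) * (\<Sum>n\<in>Poly_Mapping.keys g. ?G n))"
    using poly_decomp[of f] poly_decomp[of g] by simp
  also have "\<dots> = (\<Sum>m\<in>Poly_Mapping.keys f. \<Sum>n\<in>Poly_Mapping.keys g. pdiff i (?F m) * ?G n + ?F m * pdiff i (?G n))"
    by (simp add: sum_product pdiff_sum pdiff_mult_single)
  also have "\<dots> = pdiff i (\<Sum>m\<in>Poly_Mapping.keys f. ?F m) * (\<Sum>n\<in>Poly_Mapping.keys g. ?G n)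
     + (\<Sum>m\<in>Poly_Mapping.keys f. ?F m) * pdiff i (\<Sum>n\<in>Poly_Mapping.keys g. ?G n)"
    by (simp add: sum_product pdiff_sum sum.distrib)
  finally show ?thesis using poly_decomp[of f] poly_decomp[of g] by simp
qed

lemma ideal_diff: "is_ideal I \<Longrightarrow> f \<in> I \<Longrightarrow> g \<in> I \<Longrightarrow> f - g \<in> I"
proof -
  assume I: "is_ideal I" and f: "f \<in> I" and g: "g \<in> I"
  have "(-1) * g \<in> I" using I g unfolding is_ideal_def by blast
  then have "f + (-1) * g \<in> I" using I f unfolding is_ideal_def by blast
  then show ?thesis by simp
qed

lemma ideal_mult_right: "is_ideal I \<Longrightarrow> f \<in> I \<Longrightarrow> f * r \<in> I"
  unfolding is_ideal_def by (simp add: mult.commute)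

lemma ideal_UNIV: "is_ideal UNIV" by (simp add: is_ideal_def)

lemma ideal_gen_ideal: "is_ideal (ideal_gen X)"
  unfolding ideal_gen_def is_ideal_def by auto

lemma ideal_gen_sub: "X \<subseteq> ideal_gen X"
  unfolding ideal_gen_def by blast

lemma ideal_gen_least: "is_ideal J \<Longrightarrow> X \<subseteq> J \<Longrightarrow> ideal_gen X \<subseteq> J"
  unfolding ideal_gen_def by blast

lemma ideal_gen_mono: "X \<subseteq> Y \<Longrightarrow> ideal_gen X \<subseteq> ideal_gen Y"
  unfolding ideal_gen_def by blast

lemma ideal_prod_ideal: "is_ideal (ideal_prod I J)"
  unfolding ideal_prod_def by (rule ideal_gen_ideal)

lemma ideal_prod_mem: "f \<in> I \<Longrightarrow> g \<in> J \<Longrightarrow> f * g \<in> ideal_prod I J"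
  unfolding ideal_prod_def by (rule subsetD[OF ideal_gen_sub]) blast

lemma ideal_prod_least: "is_ideal K \<Longrightarrow> (\<And>f g. f \<in> I \<Longrightarrow> g \<in> J \<Longrightarrow> f * g \<in> K) \<Longrightarrow> ideal_prod I J \<subseteq> K"
  unfolding ideal_prod_def by (rule ideal_gen_least) auto

lemma ideal_prod_mono: "I \<subseteq> I' \<Longrightarrow> J \<subseteq> J' \<Longrightarrow> ideal_prod I J \<subseteq> ideal_prod I' J'"
  unfolding ideal_prod_def by (rule ideal_gen_mono) auto

lemma ideal_prod_comm: "ideal_prod I J = ideal_prod J I"
proof -
  have *: "{f * g |f g. f \<in> A \<and> g \<in> B} \<subseteq> {f * g |f g. f \<in> B \<and> g \<in> A}" for A B :: "'a set"
  proof
    fix x assume "x \<in> {f * g |f g. f \<in> A \<and> g \<in> B}"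
    then obtain f g where "x = f * g" "f \<in> A" "g \<in> B" by blast
    then have "x = g * f \<and> g \<in> B \<and> f \<in> A" by (simp add: mult.commute)
    then show "x \<in> {f * g |f g. f \<in> B \<and> g \<in> A}" by blast
  qed
  have "{f * g |f g. f \<in> I \<and> g \<in> J} = {f * g |f g. f \<in> J \<and> g \<in> I}"
    using *[of I J] *[of J I] by (rule equalityI)
  then show ?thesis unfolding ideal_prod_def by simp
qed

lemma ideal_prod_le_right: "is_ideal J \<Longrightarrow> ideal_prod I J \<subseteq> J"
  by (rule ideal_prod_least) (auto simp: is_ideal_def)

lemma ideal_prod_le_left: "is_ideal I \<Longrightarrow> ideal_prod I J \<subseteq> I"
  by (metis ideal_prod_comm ideal_prod_le_right)

lemma ideal_colon_ideal: "is_ideal I \<Longrightarrow> is_ideal (ideal_colon I J)"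
  unfolding is_ideal_def ideal_colon_def by (auto simp: distrib_right mult.assoc)

lemma ideal_sum_ideal: "is_ideal I \<Longrightarrow> is_ideal J \<Longrightarrow> is_ideal (ideal_sum I J)"
proof -
  assume I: "is_ideal I" and J: "is_ideal J"
  have "0 \<in> ideal_sum I J" using I J unfolding ideal_sum_def is_ideal_def by force
  moreover have "x + y \<in> ideal_sum I J" if xy: "x \<in> ideal_sum I J" "y \<in> ideal_sum I J" for x y
  proof -
    obtain a b where "x = a + b" "a \<in> I" "b \<in> J"
      using xy(1) unfolding ideal_sum_def by blast
    moreover obtain c d where "y = c + d" "c \<in> I" "d \<in> J"
      using xy(2) unfolding ideal_sum_def by blast
    moreover have "a + b + (c + d) = (a + c) + (b + d)" by (simp add: algebra_simps)
    ultimately show ?thesis using I J unfolding ideal_sum_def is_ideal_def by (metis (mono_tags, lifting) mem_Collect_eq)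
  qed
  moreover have "r * x \<in> ideal_sum I J" if xs: "x \<in> ideal_sum I J" for x r
  proof -
    obtain a b where "x = a + b" "a \<in> I" "b \<in> J"
      using xs unfolding ideal_sum_def by blast
    moreover have "r * a \<in> I" "r * b \<in> J" using I J \<open>a \<in> I\<close> \<open>b \<in> J\<close> unfolding is_ideal_def by blast+
    ultimately have "r * x = r * a + r * b \<and> r * a \<in> I \<and> r * b \<in> J" by (simp add: distrib_left)
    then show ?thesis unfolding ideal_sum_def by blast
  qed
  ultimately show ?thesis unfolding is_ideal_def by blast
qed

lemma ideal_sum_le: "is_ideal K \<Longrightarrow> I \<subseteq> K \<Longrightarrow> J \<subseteq> K \<Longrightarrow> ideal_sum I J \<subseteq> K"
  unfolding ideal_sum_def is_ideal_def by blast

lemma ideal_sum_left: "is_ideal J \<Longrightarrow> I \<subseteq> ideal_sum I J"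
  unfolding ideal_sum_def is_ideal_def by force

lemma ideal_sum_right: "is_ideal I \<Longrightarrow> J \<subseteq> ideal_sum I J"
  unfolding ideal_sum_def is_ideal_def by force

lemma prod_sum_le_left:
  assumes "is_ideal R" "ideal_prod A C \<subseteq> R" "ideal_prod B C \<subseteq> R"
  shows "ideal_prod (ideal_sum A B) C \<subseteq> R"
proof (rule ideal_prod_least[OF assms(1)])
  fix f g assume "f \<in> ideal_sum A B" "g \<in> C"
  then obtain a b where ab: "f = a + b" "a \<in> A" "b \<in> B" unfolding ideal_sum_def by blast
  have "a * g \<in> R" "b * g \<in> R" using ab assms ideal_prod_mem \<open>g \<in> C\<close> by blast+
  then show "f * g \<in> R" using assms(1) ab by (simp add: distrib_right is_ideal_def)
qed

lemma prod_sum_le_right: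
  assumes "is_ideal R" "ideal_prod C A \<subseteq> R" "ideal_prod C B \<subseteq> R"
  shows "ideal_prod C (ideal_sum A B) \<subseteq> R"
  using prod_sum_le_left[OF assms(1), of A C B] assms by (simp add: ideal_prod_comm)

lemma prod_prod_le:
  assumes R: "is_ideal R"
    and H: "\<And>a b c d. a \<in> A \<Longrightarrow> b \<in> B \<Longrightarrow> c \<in> C \<Longrightarrow> d \<in> D \<Longrightarrow> (a * b) * (c * d) \<in> R"
  shows "ideal_prod (ideal_prod A B) (ideal_prod C D) \<subseteq> R"
proof (rule ideal_prod_least[OF R])
  fix x y assume x: "x \<in> ideal_prod A B" and y: "y \<in> ideal_prod C D"
  have "ideal_prod C D \<subseteq> ideal_colon R {a * b}" if "a \<in> A" "b \<in> B" for a b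
    using H that by (intro ideal_prod_least ideal_colon_ideal R) (auto simp: ideal_colon_def mult.commute[of _ "a * b"])
  then have "ideal_prod A B \<subseteq> ideal_colon R (ideal_prod C D)"
    by (intro ideal_prod_least ideal_colon_ideal R) (auto simp: ideal_colon_def mult.commute)
  then show "x * y \<in> R" using x y by (auto simp: ideal_colon_def)
qed

lemma prod_assoc_le: "ideal_prod A (ideal_prod B C) \<subseteq> ideal_prod (ideal_prod A B) C"
proof (rule ideal_prod_least[OF ideal_prod_ideal])
  fix a x assume a: "a \<in> A" and x: "x \<in> ideal_prod B C"
  have "ideal_prod B C \<subseteq> ideal_colon (ideal_prod (ideal_prod A B) C) {a}"
    using a by (intro ideal_prod_least ideal_colon_ideal ideal_prod_ideal)
      (auto simp: ideal_colon_def ideal_prod_mem mult.assoc[symmetric] mult.commute[of _ a])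
  then show "a * x \<in> ideal_prod (ideal_prod A B) C" using x by (auto simp: ideal_colon_def mult.commute)
qed

lemma ideal_pow_ideal: "is_ideal (ideal_pow L n)"
  by (cases n) (simp_all add: ideal_UNIV ideal_prod_ideal)

lemma ideal_pow_Suc_le: "ideal_pow L (Suc n) \<subseteq> ideal_pow L n"
  by (simp add: ideal_prod_le_right ideal_pow_ideal)

lemma ideal_pow_antimono: "m \<le> n \<Longrightarrow> ideal_pow L n \<subseteq> ideal_pow L m"
  by (induction n rule: dec_induct) (use ideal_pow_Suc_le in blast)+

lemma ideal_pow_add_le: "ideal_pow L (s + r) \<subseteq> ideal_prod (ideal_pow L s) (ideal_pow L r)"
proof (induction s)
  case 0
  have "x \<in> ideal_prod UNIV (ideal_pow L r)" if "x \<in> ideal_pow L r" for x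
    using ideal_prod_mem[of 1 UNIV x] that by simp
  then show ?case by auto
next
  case (Suc s)
  have "ideal_pow L (Suc s + r) = ideal_prod L (ideal_pow L (s + r))" by simp
  also have "\<dots> \<subseteq> ideal_prod L (ideal_prod (ideal_pow L s) (ideal_pow L r))"
    using Suc by (intro ideal_prod_mono) auto
  also have "\<dots> \<subseteq> ideal_prod (ideal_pow L (Suc s)) (ideal_pow L r)"
    using prod_assoc_le by simp
  finally show ?case .
qed

lemma ideal_pow_le: "is_ideal I \<Longrightarrow> ideal_pow I (Suc n) \<subseteq> I"
  by (simp add: ideal_prod_le_left)

lemma ideal_mult_left: "is_ideal I \<Longrightarrow> f \<in> I \<Longrightarrow> r * f \<in> I"
  unfolding is_ideal_def by blast

lemma prod_memI: "x = y * z \<Longrightarrow> y \<in> I \<Longrightarrow> z \<in> J \<Longrightarrow> x \<in> ideal_prod I J"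
  using ideal_prod_mem by blast

lemma sg_mem: "strongly_golod I \<Longrightarrow> a \<in> deriv_ideal I \<Longrightarrow> c \<in> deriv_ideal I \<Longrightarrow> a * c \<in> I"
  unfolding strongly_golod_def using ideal_prod_mem by blast

lemma deriv_ideal_ideal: "is_ideal (deriv_ideal X)"
  unfolding deriv_ideal_def by (rule ideal_gen_ideal)

lemma pdiff_in_deriv: "f \<in> X \<Longrightarrow> pdiff i f \<in> deriv_ideal X"
  unfolding deriv_ideal_def by (rule subsetD[OF ideal_gen_sub]) blast

lemma deriv_least: "is_ideal K \<Longrightarrow> (\<And>i f. f \<in> X \<Longrightarrow> pdiff i f \<in> K) \<Longrightarrow> deriv_ideal X \<subseteq> K"
  unfolding deriv_ideal_def by (rule ideal_gen_least) auto

lemma deriv_mono: "X \<subseteq> Y \<Longrightarrow> deriv_ideal X \<subseteq> deriv_ideal Y"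
  by (rule deriv_least[OF deriv_ideal_ideal]) (auto intro: pdiff_in_deriv)

lemma deriv_prod:
  fixes X Y :: "('v, 'k::comm_ring_1) mpoly set"
  shows "deriv_ideal (ideal_prod X Y) \<subseteq>
    ideal_sum (ideal_sum (ideal_prod X Y) (ideal_prod (deriv_ideal X) Y)) (ideal_prod X (deriv_ideal Y))"
    (is "_ \<subseteq> ?K")
proof -
  have Kid: "is_ideal ?K" by (intro ideal_sum_ideal ideal_prod_ideal)
  have L: "ideal_sum (ideal_prod X Y) (ideal_prod (deriv_ideal X) Y) \<subseteq> ?K"
    by (rule ideal_sum_left) (rule ideal_prod_ideal)
  have K1: "ideal_prod X Y \<subseteq> ?K"
  proof -
    have "ideal_prod X Y \<subseteq> ideal_sum (ideal_prod X Y) (ideal_prod (deriv_ideal X) Y)"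
      by (rule ideal_sum_left) (rule ideal_prod_ideal)
    then show ?thesis using L by blast
  qed
  have K2: "ideal_prod (deriv_ideal X) Y \<subseteq> ?K"
  proof -
    have "ideal_prod (deriv_ideal X) Y \<subseteq> ideal_sum (ideal_prod X Y) (ideal_prod (deriv_ideal X) Y)"
      by (rule ideal_sum_right) (rule ideal_prod_ideal)
    then show ?thesis using L by blast
  qed
  have K3: "ideal_prod X (deriv_ideal Y) \<subseteq> ?K"
    by (rule ideal_sum_right) (intro ideal_sum_ideal ideal_prod_ideal)
  let ?M = "{h \<in> ideal_prod X Y. \<forall>i. pdiff i h \<in> ?K}"
  have Mid: "is_ideal ?M"
    unfolding is_ideal_def
  proof (intro conjI ballI allI)
    show "0 \<in> ?M" using ideal_prod_ideal Kid by (auto simp: is_ideal_def)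
  next
    fix f g assume "f \<in> ?M" "g \<in> ?M"
    then show "f + g \<in> ?M" using ideal_prod_ideal[of X Y] Kid by (auto simp: is_ideal_def pdiff_add)
  next
    fix f r assume f: "f \<in> ?M"
    have "r * f \<in> ideal_prod X Y" using f ideal_mult_left[OF ideal_prod_ideal] by blast
    moreover have "pdiff i (r * f) \<in> ?K" for i
    proof -
      have "pdiff i r * f \<in> ?K" using f K1 ideal_mult_left[OF ideal_prod_ideal] by blast
      moreover have "r * pdiff i f \<in> ?K" using f Kid ideal_mult_left by blast
      ultimately show ?thesis using Kid by (simp add: pdiff_mult is_ideal_def)
    qed
    ultimately show "r * f \<in> ?M" by blast
  qed
  have "ideal_prod X Y \<subseteq> ?M"
  proof (rule ideal_prod_least[OF Mid])
    fix f g assume f: "f \<in> X" and g: "g \<in> Y"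
    have "pdiff i (f * g) \<in> ?K" for i
    proof -
      have "pdiff i f * g \<in> ?K" using K2 ideal_prod_mem[OF pdiff_in_deriv[OF f] g] by blast
      moreover have "f * pdiff i g \<in> ?K" using K3 ideal_prod_mem[OF f pdiff_in_deriv[OF g]] by blast
      ultimately show ?thesis using Kid by (simp add: pdiff_mult is_ideal_def)
    qed
    then show "f * g \<in> ?M" using ideal_prod_mem[OF f g] by blast
  qed
  then show ?thesis by (intro deriv_least[OF Kid]) blast
qed

lemma deriv_sum:
  fixes I J :: "('v, 'k::comm_ring_1) mpoly set"
  shows "deriv_ideal (ideal_sum I J) \<subseteq> ideal_sum (deriv_ideal I) (deriv_ideal J)"
proof (rule deriv_least[OF ideal_sum_ideal[OF deriv_ideal_ideal deriv_ideal_ideal]])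
  fix i h assume "h \<in> ideal_sum I J"
  then obtain f g where "h = f + g" "f \<in> I" "g \<in> J" unfolding ideal_sum_def by blast
  then have "pdiff i h = pdiff i f + pdiff i g \<and> pdiff i f \<in> deriv_ideal I \<and> pdiff i g \<in> deriv_ideal J"
    by (simp add: pdiff_add pdiff_in_deriv)
  then show "pdiff i h \<in> ideal_sum (deriv_ideal I) (deriv_ideal J)" unfolding ideal_sum_def by blast
qed

lemma sg_inter:
  fixes I J :: "('v, 'k::comm_ring_1) mpoly set"
  assumes "strongly_golod I" "strongly_golod J"
  shows "strongly_golod (I \<inter> J)"
proof -
  have "ideal_prod (deriv_ideal (I \<inter> J)) (deriv_ideal (I \<inter> J)) \<subseteq> ideal_prod (deriv_ideal I) (deriv_ideal I)"
    by (intro ideal_prod_mono deriv_mono) auto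
  moreover have "ideal_prod (deriv_ideal (I \<inter> J)) (deriv_ideal (I \<inter> J)) \<subseteq> ideal_prod (deriv_ideal J) (deriv_ideal J)"
    by (intro ideal_prod_mono deriv_mono) auto
  ultimately show ?thesis using assms unfolding strongly_golod_def by blast
qed

lemma sg_prod:
  fixes I J :: "('v, 'k::comm_ring_1) mpoly set"
  assumes I: "is_ideal I" and J: "is_ideal J" and sI: "strongly_golod I" and sJ: "strongly_golod J"
  shows "strongly_golod (ideal_prod I J)"
proof -
  let ?T = "ideal_prod I J"
  let ?P = "ideal_prod I J"
  let ?Q = "ideal_prod (deriv_ideal I) J"
  let ?R = "ideal_prod I (deriv_ideal J)"
  let ?K = "ideal_sum (ideal_sum ?P ?Q) ?R"
  have T: "is_ideal ?T" by (rule ideal_prod_ideal)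
  have PZ: "ideal_prod ?P Z \<subseteq> ?T" for Z by (rule ideal_prod_le_left[OF T])
  have ZP: "ideal_prod Z ?P \<subseteq> ?T" for Z by (rule ideal_prod_le_right[OF T])
  have QQ: "ideal_prod ?Q ?Q \<subseteq> ?T"
  proof (rule prod_prod_le[OF T])
    fix a b c d assume a: "a \<in> deriv_ideal I" and b: "b \<in> J" and c: "c \<in> deriv_ideal I" and d: "d \<in> J"
    show "a * b * (c * d) \<in> ?T"
      by (rule prod_memI[OF _ sg_mem[OF sI a c] ideal_mult_right[OF J b, of d]]) (simp add: ac_simps)
  qed
  have QR: "ideal_prod ?Q ?R \<subseteq> ?T"
  proof (rule prod_prod_le[OF T])
    fix a b c d assume a: "a \<in> deriv_ideal I" and b: "b \<in> J" and c: "c \<in> I" and d: "d \<in> deriv_ideal J"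
    show "a * b * (c * d) \<in> ?T"
      by (rule prod_memI[OF _ c ideal_mult_right[OF J b, of "a * d"]]) (simp add: ac_simps)
  qed
  have RQ: "ideal_prod ?R ?Q \<subseteq> ?T"
  proof (rule prod_prod_le[OF T])
    fix a b c d assume a: "a \<in> I" and b: "b \<in> deriv_ideal J" and c: "c \<in> deriv_ideal I" and d: "d \<in> J"
    show "a * b * (c * d) \<in> ?T"
      by (rule prod_memI[OF _ a ideal_mult_right[OF J d, of "b * c"]]) (simp add: ac_simps)
  qed
  have RR: "ideal_prod ?R ?R \<subseteq> ?T"
  proof (rule prod_prod_le[OF T])
    fix a b c d assume a: "a \<in> I" and b: "b \<in> deriv_ideal J" and c: "c \<in> I" and d: "d \<in> deriv_ideal J"
    show "a * b * (c * d) \<in> ?T"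
      by (rule prod_memI[OF _ ideal_mult_right[OF I a, of c] sg_mem[OF sJ b d]]) (simp add: ac_simps)
  qed
  have row: "ideal_prod X ?K \<subseteq> ?T" if "ideal_prod X ?P \<subseteq> ?T" "ideal_prod X ?Q \<subseteq> ?T" "ideal_prod X ?R \<subseteq> ?T" for X
    using that by (intro prod_sum_le_right[OF T]) auto
  have "ideal_prod ?K ?K \<subseteq> ?T"
    apply (intro prod_sum_le_left[OF T])
      apply (rule PZ)
     apply (rule row; (rule ZP | rule QQ | rule QR))
    apply (rule row; (rule ZP | rule RQ | rule RR))
    done
  moreover have "deriv_ideal (ideal_prod I J) \<subseteq> ?K" by (rule deriv_prod)
  ultimately show ?thesis unfolding strongly_golod_def using ideal_prod_mono by blast
qed

lemma sg_sum:
  fixes I J :: "('v, 'k::comm_ring_1) mpoly set"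
  assumes I: "is_ideal I" and J: "is_ideal J" and sI: "strongly_golod I" and sJ: "strongly_golod J"
    and H: "ideal_prod (deriv_ideal I) (deriv_ideal J) \<subseteq> ideal_sum I J"
  shows "strongly_golod (ideal_sum I J)"
proof -
  let ?T = "ideal_sum I J"
  have T: "is_ideal ?T" using I J by (rule ideal_sum_ideal)
  have TI: "I \<subseteq> ?T" using J by (rule ideal_sum_left)
  have TJ: "J \<subseteq> ?T" using I by (rule ideal_sum_right)
  let ?D = "ideal_sum (deriv_ideal I) (deriv_ideal J)"
  have "ideal_prod ?D ?D \<subseteq> ?T"
  proof (intro prod_sum_le_left[OF T] prod_sum_le_right[OF T])
    show "ideal_prod (deriv_ideal I) (deriv_ideal I) \<subseteq> ?T" using sI TI unfolding strongly_golod_def by blast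
    show "ideal_prod (deriv_ideal I) (deriv_ideal J) \<subseteq> ?T" by (rule H)
    show "ideal_prod (deriv_ideal J) (deriv_ideal I) \<subseteq> ?T" using H by (simp add: ideal_prod_comm)
    show "ideal_prod (deriv_ideal J) (deriv_ideal J) \<subseteq> ?T" using sJ TJ unfolding strongly_golod_def by blast
  qed
  moreover have "deriv_ideal ?T \<subseteq> ?D" by (rule deriv_sum)
  ultimately show ?thesis unfolding strongly_golod_def using ideal_prod_mono by blast
qed

lemma colon_pow2I:
  assumes J: "is_ideal J" and I: "is_ideal I"
    and H: "\<And>h1 h2. h1 \<in> J \<Longrightarrow> h2 \<in> J \<Longrightarrow> y * (h1 * h2) \<in> I"
  shows "y \<in> ideal_colon I (ideal_pow J 2)"
proof -
  have "ideal_pow J 2 \<subseteq> ideal_colon I {y}"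
  proof -
    have "ideal_pow J 2 = ideal_prod J (ideal_prod J UNIV)" by (simp add: numeral_2_eq_2)
    also have "\<dots> \<subseteq> ideal_colon I {y}"
    proof (rule ideal_prod_least[OF ideal_colon_ideal[OF I]])
      fix f g assume "f \<in> J" "g \<in> ideal_prod J UNIV"
      then have "g \<in> J" using ideal_prod_le_left[OF J] by blast
      then show "f * g \<in> ideal_colon I {y}" using H[OF \<open>f \<in> J\<close> \<open>g \<in> J\<close>] by (simp add: ideal_colon_def mult.commute)
    qed
    finally show ?thesis .
  qed
  then show ?thesis by (auto simp: ideal_colon_def mult.commute)
qed

lemma sg_colon:
  fixes I J :: "('v, 'k::comm_ring_1) mpoly set"
  assumes I: "is_ideal I" and J: "is_ideal J" and sI: "strongly_golod I"
    and H: "ideal_colon I J = ideal_colon I (ideal_pow J 2)"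
  shows "strongly_golod (ideal_colon I J)"
proof -
  let ?Q = "ideal_colon I J"
  have Q: "is_ideal ?Q" by (rule ideal_colon_ideal[OF I])
  have Q2: "y \<in> ?Q" if "\<And>h1 h2. h1 \<in> J \<Longrightarrow> h2 \<in> J \<Longrightarrow> y * (h1 * h2) \<in> I" for y
    using colon_pow2I[OF J I that] H by simp
  have key: "pdiff i f * pdiff j g \<in> ?Q" if f: "f \<in> ?Q" and g: "g \<in> ?Q" for i j f g
  proof -
    let ?y = "pdiff i f * pdiff j g"
    have main: "?y * h1 * h2 * h3 \<in> I" if h: "h1 \<in> J" "h2 \<in> J" "h3 \<in> J" for h1 h2 h3
    proof -
      have fh: "f * h \<in> I" "g * h \<in> I" if "h \<in> J" for h using f g that by (auto simp: ideal_colon_def)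
      have A: "pdiff i (f * h1) * pdiff j (g * h2) * h3 \<in> I"
        using sg_mem[OF sI pdiff_in_deriv[OF fh(1)[OF h(1)]] pdiff_in_deriv[OF fh(2)[OF h(2)]]]
        by (rule ideal_mult_right[OF I])
      have B: "(g * h1) * (pdiff i f * pdiff j h2 * h3) \<in> I" using ideal_mult_right[OF I fh(2)[OF h(1)]] .
      have C: "(f * h2) * (pdiff i h1 * pdiff j g * h3) \<in> I" using ideal_mult_right[OF I fh(1)[OF h(2)]] .
      have D: "(f * h3) * (g * pdiff i h1 * pdiff j h2) \<in> I" using ideal_mult_right[OF I fh(1)[OF h(3)]] .
      have eq: "?y * h1 * h2 * h3 = pdiff i (f * h1) * pdiff j (g * h2) * h3
          - (g * h1) * (pdiff i f * pdiff j h2 * h3) - (f * h2) * (pdiff i h1 * pdiff j g * h3)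
          - (f * h3) * (g * pdiff i h1 * pdiff j h2)"
        by (simp add: pdiff_mult algebra_simps)
      show ?thesis unfolding eq using A B C D by (intro ideal_diff[OF I]) auto
    qed
    have "?y * h1 \<in> ?Q" if "h1 \<in> J" for h1
      by (rule Q2) (use main[OF that] in \<open>simp add: mult.assoc\<close>)
    then have "?y * h1 * h2 \<in> I" if "h1 \<in> J" "h2 \<in> J" for h1 h2
      using that by (auto simp: ideal_colon_def)
    then show ?thesis by (intro Q2) (simp add: mult.assoc)
  qed
  have "ideal_prod (deriv_ideal ?Q) (deriv_ideal ?Q) \<subseteq> ?Q"
  proof (rule ideal_prod_least[OF Q])
    fix x y assume x: "x \<in> deriv_ideal ?Q" and y: "y \<in> deriv_ideal ?Q"
    have "deriv_ideal ?Q \<subseteq> ideal_colon ?Q {pdiff j g}" if g: "g \<in> ?Q" for j g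
      by (rule deriv_least[OF ideal_colon_ideal[OF Q]]) (use key g in \<open>auto simp: ideal_colon_def\<close>)
    then have "deriv_ideal ?Q \<subseteq> ideal_colon ?Q {x}"
      using x by (intro deriv_least[OF ideal_colon_ideal[OF Q]]) (auto simp: ideal_colon_def mult.commute)
    then show "x * y \<in> ?Q" using y by (auto simp: ideal_colon_def mult.commute)
  qed
  then show ?thesis unfolding strongly_golod_def .
qed

lemma deriv_pow_step:
  fixes L :: "('v, 'k::comm_ring_1) mpoly set"
  assumes "ideal_prod L (deriv_ideal (ideal_pow L n)) \<subseteq> ideal_pow L n"
  shows "deriv_ideal (ideal_pow L (Suc n)) \<subseteq> ideal_pow L n"
proof -
  have P: "is_ideal (ideal_pow L n)" by (rule ideal_pow_ideal)
  have "deriv_ideal (ideal_pow L (Suc n)) \<subseteq> ideal_sum (ideal_sum (ideal_prod L (ideal_pow L n))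
     (ideal_prod (deriv_ideal L) (ideal_pow L n))) (ideal_prod L (deriv_ideal (ideal_pow L n)))"
    using deriv_prod by simp
  also have "\<dots> \<subseteq> ideal_pow L n"
    by (intro ideal_sum_le P ideal_sum_ideal ideal_prod_ideal ideal_prod_le_right assms)
  finally show ?thesis .
qed

lemma deriv_pow:
  fixes L :: "('v, 'k::comm_ring_1) mpoly set"
  shows "deriv_ideal (ideal_pow L (Suc n)) \<subseteq> ideal_pow L n"
proof (induction n)
  case 0
  show ?case by (rule deriv_pow_step) simp
next
  case (Suc n)
  show ?case
  proof (rule deriv_pow_step)
    have "ideal_prod L (deriv_ideal (ideal_pow L (Suc n))) \<subseteq> ideal_prod L (ideal_pow L n)"
      using Suc by (intro ideal_prod_mono) auto
    then show "ideal_prod L (deriv_ideal (ideal_pow L (Suc n))) \<subseteq> ideal_pow L (Suc n)" by simp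
  qed
qed

lemma pow_pow_le:
  assumes I: "is_ideal I" and j: "j \<ge> 1"
  shows "ideal_prod (ideal_pow I j) (ideal_pow I j) \<subseteq> ideal_pow I (Suc j)"
proof -
  obtain j' where "j = Suc j'" using j by (cases j) auto
  then have "ideal_pow I j \<subseteq> I" using ideal_pow_le[OF I] by simp
  then have "ideal_prod (ideal_pow I j) (ideal_pow I j) \<subseteq> ideal_prod I (ideal_pow I j)"
    by (intro ideal_prod_mono) auto
  then show ?thesis by simp
qed

lemma sg_pow:
  fixes I :: "('v, 'k::comm_ring_1) mpoly set"
  assumes I: "is_ideal I" and k: "k \<ge> 2"
  shows "strongly_golod (ideal_pow I k)"
proof -
  obtain j where kj: "k = Suc j" and j: "j \<ge> 1" using k by (cases k) auto
  have "ideal_prod (deriv_ideal (ideal_pow I k)) (deriv_ideal (ideal_pow I k)) \<subseteq> ideal_prod (ideal_pow I j) (ideal_pow I j)"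
    unfolding kj by (intro ideal_prod_mono deriv_pow)
  also have "\<dots> \<subseteq> ideal_pow I k" unfolding kj by (rule pow_pow_le[OF I j])
  finally show ?thesis unfolding strongly_golod_def .
qed

lemma colon_pow_mono: "s \<le> t \<Longrightarrow> ideal_colon A (ideal_pow L s) \<subseteq> ideal_colon A (ideal_pow L t)"
  using ideal_pow_antimono[of s t L] by (auto simp: ideal_colon_def)

lemma colon_union_ideal:
  assumes A: "is_ideal A"
  shows "is_ideal (\<Union>t\<in>{1..}. ideal_colon A (ideal_pow L t))" (is "is_ideal ?U")
  unfolding is_ideal_def
proof (intro conjI ballI allI)
  have "0 \<in> ideal_colon A (ideal_pow L 1)" using ideal_colon_ideal[OF A, of "ideal_pow L 1"] by (simp only: is_ideal_def)
  then show "0 \<in> ?U" by blast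
next
  fix f g assume "f \<in> ?U" "g \<in> ?U"
  then obtain s t where s: "s \<ge> 1" "f \<in> ideal_colon A (ideal_pow L s)" and t: "t \<ge> 1" "g \<in> ideal_colon A (ideal_pow L t)"
    by auto
  have "f \<in> ideal_colon A (ideal_pow L (max s t))" "g \<in> ideal_colon A (ideal_pow L (max s t))"
    using s t colon_pow_mono[of s "max s t" A L] colon_pow_mono[of t "max s t" A L] by auto
  then have "f + g \<in> ideal_colon A (ideal_pow L (max s t))"
    using ideal_colon_ideal[OF A] unfolding is_ideal_def by blast
  then show "f + g \<in> ?U" using s t by auto
next
  fix f r assume "f \<in> ?U"
  then obtain s where s: "s \<ge> 1" "f \<in> ideal_colon A (ideal_pow L s)" by auto
  then have "r * f \<in> ideal_colon A (ideal_pow L s)"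
    using ideal_colon_ideal[OF A] unfolding is_ideal_def by blast
  then show "r * f \<in> ?U" using s by auto
qed

lemma sg_colon_union:
  fixes I L :: "('v, 'k::comm_ring_1) mpoly set"
  assumes I: "is_ideal I" and k: "k \<ge> 2"
  shows "strongly_golod (\<Union>t\<in>{1..}. ideal_colon (ideal_pow I k) (ideal_pow L t))"
proof -
  obtain j where kj: "k = Suc j" and j: "j \<ge> 1" using k by (cases k) auto
  let ?A = "ideal_pow I k"
  let ?B = "ideal_pow I j"
  let ?U = "\<Union>t\<in>{1..}. ideal_colon ?A (ideal_pow L t)"
  let ?C = "\<Union>t\<in>{1..}. ideal_colon ?B (ideal_pow L t)"
  have Aid: "is_ideal ?A" and Bid: "is_ideal ?B" by (rule ideal_pow_ideal)+
  have AB: "?A \<subseteq> ?B" unfolding kj by (rule ideal_pow_antimono) simp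
  have U: "is_ideal ?U" and C: "is_ideal ?C" by (rule colon_union_ideal[OF Aid], rule colon_union_ideal[OF Bid])
  have step1: "pdiff i f \<in> ideal_colon ?B (ideal_pow L (Suc t))" if f: "f \<in> ideal_colon ?A (ideal_pow L t)" for i f t
    unfolding ideal_colon_def
  proof (intro CollectI ballI)
    fix h assume h: "h \<in> ideal_pow L (Suc t)"
    have "h \<in> ideal_pow L t" using h ideal_pow_Suc_le by blast
    then have fh: "f * h \<in> ?A" using f by (auto simp: ideal_colon_def)
    have 1: "pdiff i (f * h) \<in> ?B" using pdiff_in_deriv[OF fh, of i] deriv_pow[of I j] kj by blast
    have "pdiff i h \<in> ideal_pow L t" using pdiff_in_deriv[OF h, of i] deriv_pow[of L t] by blast
    then have "f * pdiff i h \<in> ?B" using f AB by (auto simp: ideal_colon_def)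
    from ideal_diff[OF Bid 1 this] show "pdiff i f * h \<in> ?B" by (simp add: pdiff_mult)
  qed
  have DU: "deriv_ideal ?U \<subseteq> ?C"
  proof (rule deriv_least[OF C])
    fix i f assume "f \<in> ?U"
    then obtain t where "t \<ge> 1" "f \<in> ideal_colon ?A (ideal_pow L t)" by auto
    then show "pdiff i f \<in> ?C" using step1 by (intro UN_I[of "Suc t"]) auto
  qed
  have CC: "ideal_prod ?C ?C \<subseteq> ?U"
  proof (rule ideal_prod_least[OF U])
    fix x y assume "x \<in> ?C" "y \<in> ?C"
    then obtain s t where s: "s \<ge> 1" "x \<in> ideal_colon ?B (ideal_pow L s)" and t: "t \<ge> 1" "y \<in> ideal_colon ?B (ideal_pow L t)"
      by auto
    define m where "m = max s t"
    have x: "x \<in> ideal_colon ?B (ideal_pow L m)" and y: "y \<in> ideal_colon ?B (ideal_pow L m)"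
      using s t colon_pow_mono[of s m ?B L] colon_pow_mono[of t m ?B L] by (auto simp: m_def)
    have "ideal_prod (ideal_pow L m) (ideal_pow L m) \<subseteq> ideal_colon ?A {x * y}"
    proof (rule ideal_prod_least[OF ideal_colon_ideal[OF Aid]])
      fix p q assume p: "p \<in> ideal_pow L m" and q: "q \<in> ideal_pow L m"
      have "(x * p) * (y * q) \<in> ideal_prod ?B ?B"
        using x y p q by (intro ideal_prod_mem) (auto simp: ideal_colon_def)
      then have "(x * p) * (y * q) \<in> ?A" using pow_pow_le[OF I j] kj by blast
      then show "p * q \<in> ideal_colon ?A {x * y}" by (simp add: ideal_colon_def ac_simps)
    qed
    then have "x * y \<in> ideal_colon ?A (ideal_pow L (m + m))"
      using ideal_pow_add_le[of L m m] by (auto simp: ideal_colon_def mult.commute)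
    moreover have "m + m \<ge> 1" using s by (simp add: m_def)
    ultimately show "x * y \<in> ?U" by blast
  qed
  show ?thesis unfolding strongly_golod_def
    using ideal_prod_mono[OF DU DU] CC by blast
qed


theorem theorem2p1:
  fixes a :: "'v::finite \<Rightarrow> nat"
    and I J :: "('v, 'k::field_char_0) mpoly set"
  assumes apos: "\<forall>v. a v > 0"
    and gI: "graded_ideal a I" and pI: "I \<noteq> UNIV"
    and gJ: "graded_ideal a J" and pJ: "J \<noteq> UNIV"
  shows "(strongly_golod I \<and> strongly_golod J \<longrightarrow>
            strongly_golod (I \<inter> J) \<and> strongly_golod (ideal_prod I J))
       \<and> (strongly_golod I \<and> strongly_golod J \<and>
            ideal_prod (deriv_ideal I) (deriv_ideal J) \<subseteq> ideal_sum I J \<longrightarrow>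
            strongly_golod (ideal_sum I J))
       \<and> (strongly_golod I \<and> ideal_colon I J = ideal_colon I (ideal_pow J 2) \<longrightarrow>
            strongly_golod (ideal_colon I J))
       \<and> (\<forall>k\<ge>2. strongly_golod (ideal_pow I k) \<and> strongly_golod (symbolic_power I k)
            \<and> strongly_golod (saturated_power I k))"
proof -
  have I: "is_ideal I" and J: "is_ideal J" using gI gJ unfolding graded_ideal_def by blast+
  have d: "\<forall>k\<ge>2. strongly_golod (ideal_pow I k) \<and> strongly_golod (symbolic_power I k)
            \<and> strongly_golod (saturated_power I k)"
    using sg_pow[OF I] sg_colon_union[OF I] unfolding symbolic_power_def saturated_power_def Let_def
    by blast
  show ?thesis
    using sg_inter sg_prod[OF I J] sg_sum[OF I J] sg_colon[OF I J] d by blast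
qed

end
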